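(* Let $\eta,\epsilon>0$ and let $\mu$ be a distribution over $\{-1,+1\}^n$. If $\mu$ is $(\eta,\epsilon)$-completely spectrally independent, then $\mu$ has $(\eta+1,\epsilon)$-complete limited correlation.
   Context: For a distribution $\nu$ on $\{-1,+1\}^n$: $\Omega(\nu)$ support, $\nu_\Lambda$ marginal, $\nu^\sigma$ conditional given $\sigma\in\Omega(\nu_\Lambda)$, $\nu^{\sigma\wedge i\gets x}$ further conditioned on coordinate $i$ equal $x$; $\nu^{i\gets x}$ conditioned only on coordinate $i$ equal $x$. $(\boldsymbol\lambda*\nu)(\sigma)\propto\nu(\sigma)\prod_{i:\sigma_i=+1}\lambda_i$. Spectral independence: $\nu$ is $\eta$-spectrally independent if for all $\Lambda$, $\sigma\in\Omega(\nu_\Lambda)$, the spectral radius of $\Psi_{\nu^\sigma}(i,j)=\max_{x,y\in\Omega(\nu^\sigma_i)}d_{\mathrm{TV}}(\nu_j^{\sigma\wedge i\gets x},\nu_j^{\sigma\wedge i\gets y})$ is $\le\eta$; $(\eta,\epsilon)$-completely spectrally independent if $(\boldsymbol\lambda*\nu)$ is $\eta$-spectrally independent for all $\boldsymbol\lambda\in(0,1+\epsilon]^n$. Correlation matrix: $\Psi^{\mathrm{Cor}}_\nu(i,i)=\nu_i(-1)$; for $i\ne j$, $\Psi^{\mathrm{Cor}}_\nu(i,j)=\nu_j^{i\gets+1}(+1)-\nu_j(+1)$ if $+1\in\Omega(\nu_i)$ and $0$ otherwise. Absolute correlation matrix: $\Psi^{\mathrm{AbsCor}}_\nu(i,j)=|\Psi^{\mathrm{Cor}}_\nu(i,j)|$.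 $\nu$ has $\eta$-limited correlation if for all $\Lambda$, $\sigma\in\Omega(\nu_\Lambda)$, the spectral radius of $\Psi^{\mathrm{AbsCor}}_{\nu^\sigma}$ is $\le\eta$; it has $(\eta,\epsilon)$-complete limited correlation if $(\boldsymbol\lambda*\nu)$ has $\eta$-limited correlation for all $\boldsymbol\lambda\in(0,1+\epsilon]^n$. *)

theory Defs
  imports "HOL-Library.FuncSet" "Jordan_Normal_Form.Spectral_Radius"
begin

definition cube :: "nat set \<Rightarrow> (nat \<Rightarrow> int) set" where
  "cube V = PiE V (\<lambda>_. {-1, 1})"

definition is_dist :: "nat set \<Rightarrow> ((nat \<Rightarrow> int) \<Rightarrow> real) \<Rightarrow> bool" where
  "is_dist V \<nu> \<longleftrightarrow> (\<forall>\<sigma>\<in>cube V. 0 \<le> \<nu> \<sigma>) \<and> (\<Sum>\<sigma>\<in>cube V. \<nu> \<sigma>) = 1"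

definition marg :: "nat set \<Rightarrow> ((nat \<Rightarrow> int) \<Rightarrow> real) \<Rightarrow> nat set \<Rightarrow> (nat \<Rightarrow> int) \<Rightarrow> real" where
  "marg V \<nu> \<Lambda> \<tau> = (\<Sum>\<sigma>\<in>cube V. if restrict \<sigma> \<Lambda> = \<tau> then \<nu> \<sigma> else 0)"

definition merge :: "nat set \<Rightarrow> (nat \<Rightarrow> int) \<Rightarrow> (nat \<Rightarrow> int) \<Rightarrow> (nat \<Rightarrow> int)" where
  "merge \<Lambda> \<tau> \<rho> = (\<lambda>i. if i \<in> \<Lambda> then \<tau> i else \<rho> i)"

definition cond :: "nat set \<Rightarrow> ((nat \<Rightarrow> int) \<Rightarrow> real) \<Rightarrow> nat set \<Rightarrow> (nat \<Rightarrow> int)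
    \<Rightarrow> ((nat \<Rightarrow> int) \<Rightarrow> real)" where
  "cond V \<nu> \<Lambda> \<tau> = (\<lambda>\<rho>. \<nu> (merge \<Lambda> \<tau> \<rho>) / marg V \<nu> \<Lambda> \<tau>)"

definition pt :: "nat \<Rightarrow> int \<Rightarrow> (nat \<Rightarrow> int)" where
  "pt i x = (\<lambda>k\<in>{i}. x)"

definition marg1 :: "nat set \<Rightarrow> ((nat \<Rightarrow> int) \<Rightarrow> real) \<Rightarrow> nat \<Rightarrow> int \<Rightarrow> real" where
  "marg1 V \<nu> i x = marg V \<nu> {i} (pt i x)"

definition cond1 :: "nat set \<Rightarrow> ((nat \<Rightarrow> int) \<Rightarrow> real) \<Rightarrow> nat \<Rightarrow> int \<Rightarrow> ((nat \<Rightarrow> int) \<Rightarrow> real)" where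
  "cond1 V \<nu> i x = cond V \<nu> {i} (pt i x)"

definition supp1 :: "nat set \<Rightarrow> ((nat \<Rightarrow> int) \<Rightarrow> real) \<Rightarrow> nat \<Rightarrow> int set" where
  "supp1 V \<nu> i = {x \<in> {-1, 1}. 0 < marg1 V \<nu> i x}"

definition dtv_j :: "nat set \<Rightarrow> ((nat \<Rightarrow> int) \<Rightarrow> real) \<Rightarrow> nat \<Rightarrow> int \<Rightarrow> int \<Rightarrow> nat \<Rightarrow> real" where
  "dtv_j V \<nu> i x y j = (1/2) * (\<Sum>z\<in>{-1, 1::int}.
      \<bar>marg1 (V - {i}) (cond1 V \<nu> i x) j z - marg1 (V - {i}) (cond1 V \<nu> i y) j z\<bar>)"

text \<open>Influence matrix Psi_nu (diagonal entries 0, as coordinate i is not a coordinate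
  of nu^{i<-x}).\<close>
definition infl :: "nat set \<Rightarrow> ((nat \<Rightarrow> int) \<Rightarrow> real) \<Rightarrow> nat \<Rightarrow> nat \<Rightarrow> real" where
  "infl V \<nu> i j = (if i = j then 0 else
      Max {dtv_j V \<nu> i x y j | x y. x \<in> supp1 V \<nu> i \<and> y \<in> supp1 V \<nu> i})"

definition cor :: "nat set \<Rightarrow> ((nat \<Rightarrow> int) \<Rightarrow> real) \<Rightarrow> nat \<Rightarrow> nat \<Rightarrow> real" where
  "cor V \<nu> i j = (if i = j then marg1 V \<nu> i (-1)
      else if 1 \<in> supp1 V \<nu> i then marg1 (V - {i}) (cond1 V \<nu> i 1) j 1 - marg1 V \<nu> j 1
      else 0)"

definition abscor :: "nat set \<Rightarrow> ((nat \<Rightarrow> int) \<Rightarrow> real) \<Rightarrow> nat \<Rightarrow> nat \<Rightarrow> real" where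
  "abscor V \<nu> i j = \<bar>cor V \<nu> i j\<bar>"

text \<open>Spectral radius of a V x V real matrix (V finite), via the library notion on
  complex matrices; the empty matrix has spectral radius 0.\<close>
definition to_mat :: "nat set \<Rightarrow> (nat \<Rightarrow> nat \<Rightarrow> real) \<Rightarrow> complex mat" where
  "to_mat V M = mat (card V) (card V)
     (\<lambda>(a, b). complex_of_real (M (sorted_list_of_set V ! a) (sorted_list_of_set V ! b)))"

definition spec_rad :: "nat set \<Rightarrow> (nat \<Rightarrow> nat \<Rightarrow> real) \<Rightarrow> real" where
  "spec_rad V M = (if V = {} then 0 else spectral_radius (to_mat V M))"

definition tilt :: "nat set \<Rightarrow> (nat \<Rightarrow> real) \<Rightarrow> ((nat \<Rightarrow> int) \<Rightarrow> real) \<Rightarrow> ((nat \<Rightarrow> int) \<Rightarrow> real)" where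
  "tilt V lam \<nu> = (\<lambda>\<sigma>. \<nu> \<sigma> * (\<Prod>i\<in>{i\<in>V. \<sigma> i = 1}. lam i) /
      (\<Sum>\<sigma>'\<in>cube V. \<nu> \<sigma>' * (\<Prod>i\<in>{i\<in>V. \<sigma>' i = 1}. lam i)))"

definition spectrally_independent :: "real \<Rightarrow> nat set \<Rightarrow> ((nat \<Rightarrow> int) \<Rightarrow> real) \<Rightarrow> bool" where
  "spectrally_independent \<eta> V \<nu> \<longleftrightarrow>
     (\<forall>\<Lambda>\<subseteq>V. \<forall>\<tau>\<in>cube \<Lambda>. 0 < marg V \<nu> \<Lambda> \<tau> \<longrightarrow>
        spec_rad (V - \<Lambda>) (infl (V - \<Lambda>) (cond V \<nu> \<Lambda> \<tau>)) \<le> \<eta>)"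

definition completely_SI :: "real \<Rightarrow> real \<Rightarrow> nat set \<Rightarrow> ((nat \<Rightarrow> int) \<Rightarrow> real) \<Rightarrow> bool" where
  "completely_SI \<eta> \<epsilon> V \<nu> \<longleftrightarrow>
     (\<forall>lam. (\<forall>i\<in>V. 0 < lam i \<and> lam i \<le> 1 + \<epsilon>) \<longrightarrow> spectrally_independent \<eta> V (tilt V lam \<nu>))"

definition limited_correlation :: "real \<Rightarrow> nat set \<Rightarrow> ((nat \<Rightarrow> int) \<Rightarrow> real) \<Rightarrow> bool" where
  "limited_correlation \<eta> V \<nu> \<longleftrightarrow>
     (\<forall>\<Lambda>\<subseteq>V. \<forall>\<tau>\<in>cube \<Lambda>. 0 < marg V \<nu> \<Lambda> \<tau> \<longrightarrow>
        spec_rad (V - \<Lambda>) (abscor (V - \<Lambda>) (cond V \<nu> \<Lambda> \<tau>)) \<le> \<eta>)"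

definition complete_limited_correlation :: "real \<Rightarrow> real \<Rightarrow> nat set \<Rightarrow> ((nat \<Rightarrow> int) \<Rightarrow> real) \<Rightarrow> bool" where
  "complete_limited_correlation \<eta> \<epsilon> V \<nu> \<longleftrightarrow>
     (\<forall>lam. (\<forall>i\<in>V. 0 < lam i \<and> lam i \<le> 1 + \<epsilon>) \<longrightarrow> limited_correlation \<eta> V (tilt V lam \<nu>))"

end

theory Submission
  imports Defs
begin


lemma mat_mult_entry:
  assumes "P \<in> carrier_mat n n" "A \<in> carrier_mat n n" "i < n" "j < n"
  shows "(P * A) $$ (i,j) = (\<Sum>l<n. P $$ (i,l) * A $$ (l,j))"
  using assms by (simp add: scalar_prod_def lessThan_atLeast0)

lemma pow_dom:
  fixes A B :: "complex mat"
  assumes A: "A \<in> carrier_mat n n" and B: "B \<in> carrier_mat n n"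
    and dom: "\<And>i j. i < n \<Longrightarrow> j < n \<Longrightarrow> Im (B $$ (i,j)) = 0 \<and> norm (A $$ (i,j)) \<le> Re (B $$ (i,j))"
  shows "i < n \<Longrightarrow> j < n \<Longrightarrow> Im ((B ^\<^sub>m k) $$ (i,j)) = 0 \<and> norm ((A ^\<^sub>m k) $$ (i,j)) \<le> Re ((B ^\<^sub>m k) $$ (i,j))"
proof (induction k arbitrary: i j)
  case 0
  then show ?case using A B by simp
next
  case (Suc k)
  have PA: "A ^\<^sub>m k \<in> carrier_mat n n" and PB: "B ^\<^sub>m k \<in> carrier_mat n n" using A B by auto
  have eA: "(A ^\<^sub>m Suc k) $$ (i,j) = (\<Sum>l<n. (A ^\<^sub>m k) $$ (i,l) * A $$ (l,j))"
    using mat_mult_entry[OF PA A Suc.prems] by simp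
  have eB: "(B ^\<^sub>m Suc k) $$ (i,j) = (\<Sum>l<n. (B ^\<^sub>m k) $$ (i,l) * B $$ (l,j))"
    using mat_mult_entry[OF PB B Suc.prems] by simp
  have IH: "\<And>l. l < n \<Longrightarrow> Im ((B ^\<^sub>m k) $$ (i,l)) = 0 \<and> norm ((A ^\<^sub>m k) $$ (i,l)) \<le> Re ((B ^\<^sub>m k) $$ (i,l))"
    using Suc.IH Suc.prems by auto
  have "Im ((B ^\<^sub>m Suc k) $$ (i,j)) = (\<Sum>l<n. Im ((B ^\<^sub>m k) $$ (i,l) * B $$ (l,j)))"
    unfolding eB by (simp add: Im_sum)
  also have "\<dots> = 0" using IH dom Suc.prems by (intro sum.neutral) auto
  finally have im: "Im ((B ^\<^sub>m Suc k) $$ (i,j)) = 0" .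
  have "norm ((A ^\<^sub>m Suc k) $$ (i,j)) \<le> (\<Sum>l<n. norm ((A ^\<^sub>m k) $$ (i,l) * A $$ (l,j)))"
    unfolding eA by (rule norm_sum)
  also have "\<dots> \<le> (\<Sum>l<n. Re ((B ^\<^sub>m k) $$ (i,l) * B $$ (l,j)))"
  proof (rule sum_mono)
    fix l assume "l \<in> {..<n}"
    hence l: "l < n" by auto
    from IH[OF l] dom[OF l Suc.prems(2)]
    show "norm ((A ^\<^sub>m k) $$ (i,l) * A $$ (l,j)) \<le> Re ((B ^\<^sub>m k) $$ (i,l) * B $$ (l,j))"
      by (simp add: norm_mult) (meson mult_mono norm_ge_zero order_trans)
  qed
  also have "\<dots> = Re ((B ^\<^sub>m Suc k) $$ (i,j))" unfolding eB by (simp add: Re_sum)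
  finally show ?case using im by simp
qed

lemma smult_pow_mat:
  fixes B :: "complex mat"
  assumes B: "B \<in> carrier_mat n n"
  shows "(c \<cdot>\<^sub>m B) ^\<^sub>m k = (c ^ k) \<cdot>\<^sub>m (B ^\<^sub>m k)"
proof (induction k)
  case 0
  then show ?case using B by (auto intro!: eq_matI)
next
  case (Suc k)
  have PB: "B ^\<^sub>m k \<in> carrier_mat n n" using B by auto
  have "(c \<cdot>\<^sub>m B) ^\<^sub>m Suc k = ((c ^ k) \<cdot>\<^sub>m (B ^\<^sub>m k)) * (c \<cdot>\<^sub>m B)" using Suc by simp
  also have "\<dots> = (c ^ k) \<cdot>\<^sub>m (B ^\<^sub>m k * (c \<cdot>\<^sub>m B))"
    using mult_smult_assoc_mat[OF PB, of "c \<cdot>\<^sub>m B" n] B by simp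
  also have "\<dots> = (c ^ k) \<cdot>\<^sub>m (c \<cdot>\<^sub>m (B ^\<^sub>m k * B))"
    using mult_smult_distrib[OF PB B] by simp
  also have "\<dots> = (c ^ Suc k) \<cdot>\<^sub>m (B ^\<^sub>m Suc k)"
    by (auto intro!: eq_matI)
  finally show ?case .
qed

lemma smult_mat_vec:
  fixes B :: "complex mat"
  assumes B: "B \<in> carrier_mat n n" and w: "w \<in> carrier_vec n"
  shows "(c \<cdot>\<^sub>m B) *\<^sub>v w = c \<cdot>\<^sub>v (B *\<^sub>v w)"
  using B w by (auto intro!: eq_vecI simp: scalar_prod_def sum_distrib_left mult.assoc)

lemma spectral_radius_nonneg:
  assumes "B \<in> carrier_mat n n" "n > 0"
  shows "0 \<le> spectral_radius B"
  using spectral_radius_mem_max(1)[OF assms] by auto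

lemma sr_mono:
  fixes A B :: "complex mat"
  assumes A: "A \<in> carrier_mat n n" and B: "B \<in> carrier_mat n n" and n: "n > 0"
    and dom: "\<And>i j. i < n \<Longrightarrow> j < n \<Longrightarrow> Im (B $$ (i,j)) = 0 \<and> norm (A $$ (i,j)) \<le> Re (B $$ (i,j))"
  shows "spectral_radius A \<le> spectral_radius B"
proof (rule ccontr)
  assume "\<not> ?thesis"
  hence lt: "spectral_radius B < spectral_radius A" by simp
  obtain e where e: "e \<in> spectrum A" and ne: "norm e = spectral_radius A"
    using spectral_radius_mem_max(1)[OF A n] by auto
  have rB0: "0 \<le> spectral_radius B" by (rule spectral_radius_nonneg[OF B n])
  define r where "r = (spectral_radius A + spectral_radius B) / 2"
  have r0: "0 < r" and rB: "spectral_radius B < r" and rA: "r < norm e"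
    using lt rB0 ne unfolding r_def by auto
  define B' where "B' = complex_of_real (1/r) \<cdot>\<^sub>m B"
  have B': "B' \<in> carrier_mat n n" using B unfolding B'_def by auto
  have "spectral_radius B' < 1"
  proof -
    obtain \<mu> where mu: "\<mu> \<in> spectrum B'" and nm: "norm \<mu> = spectral_radius B'"
      using spectral_radius_mem_max(1)[OF B' n] by auto
    then obtain w where w: "eigenvector B' w \<mu>"
      unfolding spectrum_def eigenvalue_def by auto
    have wc: "w \<in> carrier_vec n" and wz: "w \<noteq> 0\<^sub>v n" and Bw: "B' *\<^sub>v w = \<mu> \<cdot>\<^sub>v w"
      using w B' unfolding eigenvector_def by auto
    have "B *\<^sub>v w = (complex_of_real r * \<mu>) \<cdot>\<^sub>v w"
    proof -
      have "B = complex_of_real r \<cdot>\<^sub>m B'" using r0 B unfolding B'_def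
        by (auto intro!: eq_matI)
      hence "B *\<^sub>v w = complex_of_real r \<cdot>\<^sub>v (B' *\<^sub>v w)"
        using smult_mat_vec[OF B' wc] by simp
      also have "\<dots> = (complex_of_real r * \<mu>) \<cdot>\<^sub>v w" unfolding Bw
        by (auto intro!: eq_vecI)
      finally show ?thesis .
    qed
    hence "eigenvector B w (complex_of_real r * \<mu>)"
      using wc wz B unfolding eigenvector_def by auto
    hence "norm (complex_of_real r * \<mu>) \<in> norm ` spectrum B"
      unfolding spectrum_def eigenvalue_def by auto
    hence "norm (complex_of_real r * \<mu>) \<le> spectral_radius B"
      by (rule spectral_radius_mem_max(2)[OF B n])
    moreover have "norm (complex_of_real r * \<mu>) = r * norm \<mu>" using r0 by (simp add: norm_mult)
    ultimately have "r * norm \<mu> < r * 1" using rB by linarith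
    hence "norm \<mu> < 1" using r0 by (simp only: mult_less_cancel_left_pos)
    thus ?thesis using nm by simp
  qed
  then obtain c where c: "\<And>k. norm_bound (B' ^\<^sub>m k) c"
    using spectral_radius_jnf_norm_bound_less_1_upper_triangular[OF B'] by auto
  obtain v where v: "eigenvector A v e" using e unfolding spectrum_def eigenvalue_def by auto
  have vc: "v \<in> carrier_vec n" and vz: "v \<noteq> 0\<^sub>v n"
    using v A unfolding eigenvector_def by auto
  obtain i where i: "i < n" and vi: "v $ i \<noteq> 0"
    using vz vc by (metis carrier_vecD eq_vecI index_zero_vec(1) index_zero_vec(2))
  define C where "C = c * (\<Sum>l<n. norm (v $ l)) / norm (v $ i)"
  have bound: "(norm e / r) ^ k \<le> C" for k
  proof -
    have Ak: "A ^\<^sub>m k \<in> carrier_mat n n" using A by auto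
    have "norm e ^ k * norm (v $ i) = norm ((A ^\<^sub>m k *\<^sub>v v) $ i)"
      using eigenvector_pow[OF A v, of k] i vc by (simp add: norm_mult norm_power)
    also have "(A ^\<^sub>m k *\<^sub>v v) $ i = (\<Sum>l<n. (A ^\<^sub>m k) $$ (i,l) * v $ l)"
      using i Ak vc by (subst index_mult_mat_vec) (auto simp: scalar_prod_def lessThan_atLeast0 row_def)
    also have "norm \<dots> \<le> (\<Sum>l<n. norm ((A ^\<^sub>m k) $$ (i,l)) * norm (v $ l))"
      by (rule order_trans[OF norm_sum]) (simp add: norm_mult)
    also have "\<dots> \<le> (\<Sum>l<n. r ^ k * c * norm (v $ l))"
    proof (rule sum_mono)
      fix l assume "l \<in> {..<n}"
      hence l: "l < n" by auto
      have "norm ((A ^\<^sub>m k) $$ (i,l)) \<le> Re ((B ^\<^sub>m k) $$ (i,l))"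
        using pow_dom[OF A B dom i l] by auto
      also have "\<dots> \<le> norm ((B ^\<^sub>m k) $$ (i,l))" by (rule complex_Re_le_cmod)
      also have "(B ^\<^sub>m k) $$ (i,l) = complex_of_real (r ^ k) * (B' ^\<^sub>m k) $$ (i,l)"
      proof -
        have "B' ^\<^sub>m k = complex_of_real ((1/r) ^ k) \<cdot>\<^sub>m (B ^\<^sub>m k)"
          unfolding B'_def smult_pow_mat[OF B] by simp
        hence "(B' ^\<^sub>m k) $$ (i,l) = complex_of_real ((1/r) ^ k) * (B ^\<^sub>m k) $$ (i,l)"
          using B i l by simp
        thus ?thesis using r0 by (simp add: power_one_over field_simps)
      qed
      also have "norm \<dots> = r ^ k * norm ((B' ^\<^sub>m k) $$ (i,l))"
        using r0 by (simp add: norm_mult norm_power)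
      also have "\<dots> \<le> r ^ k * c"
        using c[of k] B' i l r0 unfolding norm_bound_def by auto
      finally show "norm ((A ^\<^sub>m k) $$ (i,l)) * norm (v $ l) \<le> r ^ k * c * norm (v $ l)"
        by (simp add: mult_right_mono)
    qed
    also have "\<dots> = r ^ k * (c * (\<Sum>l<n. norm (v $ l)))"
      by (simp add: sum_distrib_left mult.assoc)
    finally have "norm e ^ k * norm (v $ i) \<le> r ^ k * (c * (\<Sum>l<n. norm (v $ l)))" .
    hence "(norm e / r) ^ k * norm (v $ i) \<le> c * (\<Sum>l<n. norm (v $ l))"
      using r0 by (simp add: power_divide divide_le_eq field_simps)
    thus ?thesis unfolding C_def using vi by (simp add: le_divide_eq)
  qed
  have "1 < norm e / r" using rA r0 by simp
  then obtain k where "C < (norm e / r) ^ k" using real_arch_pow by blast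
  with bound[of k] show False by simp
qed


lemma sr_one_plus:
  fixes M :: "complex mat"
  assumes M: "M \<in> carrier_mat n n" and n: "n > 0"
  shows "spectral_radius (1\<^sub>m n + M) \<le> 1 + spectral_radius M"
proof -
  have IM: "1\<^sub>m n + M \<in> carrier_mat n n" using M by auto
  obtain e where e: "e \<in> spectrum (1\<^sub>m n + M)" and ne: "norm e = spectral_radius (1\<^sub>m n + M)"
    using spectral_radius_mem_max(1)[OF IM n] by auto
  then obtain v where v: "eigenvector (1\<^sub>m n + M) v e" unfolding spectrum_def eigenvalue_def by auto
  have vc: "v \<in> carrier_vec n" and vz: "v \<noteq> 0\<^sub>v n" and Ev: "(1\<^sub>m n + M) *\<^sub>v v = e \<cdot>\<^sub>v v"
    using v IM unfolding eigenvector_def by auto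
  have "(1\<^sub>m n + M) *\<^sub>v v = v + M *\<^sub>v v" using add_mult_distrib_mat_vec[OF one_carrier_mat M vc] vc by simp
  hence eq: "v + M *\<^sub>v v = e \<cdot>\<^sub>v v" using Ev by simp
  have "M *\<^sub>v v = (e - 1) \<cdot>\<^sub>v v"
  proof (rule eq_vecI)
    fix i assume "i < dim_vec ((e - 1) \<cdot>\<^sub>v v)"
    hence i: "i < n" using vc by simp
    have "(v + M *\<^sub>v v) $ i = (e \<cdot>\<^sub>v v) $ i" using eq by simp
    hence "v $ i + (M *\<^sub>v v) $ i = e * v $ i" using i vc M by simp
    thus "(M *\<^sub>v v) $ i = ((e - 1) \<cdot>\<^sub>v v) $ i" using i vc by (simp add: algebra_simps)
  qed (use vc M in simp)
  hence "eigenvector M v (e - 1)" using vc vz M unfolding eigenvector_def by auto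
  hence "norm (e - 1) \<in> norm ` spectrum M" unfolding spectrum_def eigenvalue_def by auto
  hence "norm (e - 1) \<le> spectral_radius M" by (rule spectral_radius_mem_max(2)[OF M n])
  moreover have "norm e \<le> 1 + norm (e - 1)" using norm_triangle_ineq[of 1 "e - 1"] by simp
  ultimately show ?thesis using ne by simp
qed

lemma spec_rad_bound:
  assumes V: "finite V"
    and ab: "\<And>i j. i \<in> V \<Longrightarrow> j \<in> V \<Longrightarrow> \<bar>a i j\<bar> \<le> (if i = j then 1 else 0) + b i j"
    and b0: "\<And>i j. i \<in> V \<Longrightarrow> j \<in> V \<Longrightarrow> 0 \<le> b i j"
  shows "spec_rad V a \<le> 1 + spec_rad V b"
proof (cases "V = {}")
  case True
  then show ?thesis by (simp add: spec_rad_def)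
next
  case False
  define n where "n = card V"
  have n: "n > 0" using False V unfolding n_def by (simp add: card_gt_0_iff)
  define L where "L = sorted_list_of_set V"
  have Ld: "distinct L" and Ll: "length L = n" and Ls: "set L = V"
    using V unfolding L_def n_def by auto
  have Lin: "k < n \<Longrightarrow> L ! k \<in> V" for k using Ll Ls by auto
  have Leq: "k < n \<Longrightarrow> m < n \<Longrightarrow> (L ! k = L ! m) = (k = m)" for k m
    using Ld Ll by (simp add: nth_eq_iff_index_eq)
  define c where "c = (\<lambda>i j. (if i = j then 1 else 0) + b i j)"
  have TA: "to_mat V a \<in> carrier_mat n n" and TB: "to_mat V b \<in> carrier_mat n n"
    and TC: "to_mat V c \<in> carrier_mat n n"
    unfolding to_mat_def n_def by auto
  have TCe: "to_mat V c = 1\<^sub>m n + to_mat V b"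
    by (rule eq_matI) (auto simp: to_mat_def c_def Leq n_def[symmetric] L_def[symmetric])
  have "spectral_radius (to_mat V a) \<le> spectral_radius (to_mat V c)"
  proof (rule sr_mono[OF TA TC n])
    fix i j assume i: "i < n" and j: "j < n"
    show "Im (to_mat V c $$ (i, j)) = 0 \<and> cmod (to_mat V a $$ (i, j)) \<le> Re (to_mat V c $$ (i, j))"
      using ab[OF Lin[OF i] Lin[OF j]] i j
      by (simp add: to_mat_def c_def n_def[symmetric] L_def[symmetric])
  qed
  also have "\<dots> \<le> 1 + spectral_radius (to_mat V b)" unfolding TCe by (rule sr_one_plus[OF TB n])
  finally show ?thesis using False by (simp add: spec_rad_def)
qed



lemma finite_cube: "finite V \<Longrightarrow> finite (cube V)"
  unfolding cube_def by (simp add: finite_PiE)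

lemma cube_val: "\<sigma> \<in> cube V \<Longrightarrow> i \<in> V \<Longrightarrow> \<sigma> i = 1 \<or> \<sigma> i = -1"
  unfolding cube_def by (auto simp: PiE_iff)

lemma restrict_pt: "(restrict \<sigma> {j} = pt j z) = (\<sigma> j = z)"
  unfolding pt_def by (auto simp: restrict_def fun_eq_iff)

lemma pt_cube: "z \<in> {-1, 1} \<Longrightarrow> pt j z \<in> cube {j}"
  unfolding pt_def cube_def by auto

lemma marg1_eq: "marg1 W \<nu> j z = (\<Sum>\<sigma>\<in>cube W. if \<sigma> j = z then \<nu> \<sigma> else 0)"
  unfolding marg1_def marg_def restrict_pt ..

lemma merge_bij:
  assumes "\<Lambda> \<subseteq> V" "\<tau> \<in> cube \<Lambda>"
  shows "bij_betw (merge \<Lambda> \<tau>) (cube (V - \<Lambda>)) {\<sigma> \<in> cube V. restrict \<sigma> \<Lambda> = \<tau>}"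
proof (rule bij_betw_byWitness[where f' = "\<lambda>\<sigma>. restrict \<sigma> (V - \<Lambda>)"])
  show "\<forall>a\<in>cube (V - \<Lambda>). restrict (merge \<Lambda> \<tau> a) (V - \<Lambda>) = a"
    by (auto simp: cube_def merge_def restrict_def PiE_iff extensional_def fun_eq_iff)
  show "\<forall>a'\<in>{\<sigma> \<in> cube V. restrict \<sigma> \<Lambda> = \<tau>}. merge \<Lambda> \<tau> (restrict a' (V - \<Lambda>)) = a'"
    using assms by (auto simp: cube_def merge_def restrict_def PiE_iff extensional_def fun_eq_iff)
  show "merge \<Lambda> \<tau> ` cube (V - \<Lambda>) \<subseteq> {\<sigma> \<in> cube V. restrict \<sigma> \<Lambda> = \<tau>}"
    using assms by (auto simp: cube_def merge_def restrict_def PiE_iff extensional_def fun_eq_iff; blast)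
  show "(\<lambda>\<sigma>. restrict \<sigma> (V - \<Lambda>)) ` {\<sigma> \<in> cube V. restrict \<sigma> \<Lambda> = \<tau>} \<subseteq> cube (V - \<Lambda>)"
    by (auto simp: cube_def PiE_iff extensional_def split: if_splits)
qed

lemma merge_sum:
  assumes "\<Lambda> \<subseteq> V" "\<tau> \<in> cube \<Lambda>" "finite V"
  shows "(\<Sum>\<rho>\<in>cube (V - \<Lambda>). f (merge \<Lambda> \<tau> \<rho>)) = (\<Sum>\<sigma>\<in>cube V. if restrict \<sigma> \<Lambda> = \<tau> then f \<sigma> else 0)"
proof -
  have "(\<Sum>\<rho>\<in>cube (V - \<Lambda>). f (merge \<Lambda> \<tau> \<rho>)) = (\<Sum>\<sigma>\<in>{\<sigma> \<in> cube V. restrict \<sigma> \<Lambda> = \<tau>}. f \<sigma>)"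
    using sum.reindex_bij_betw[OF merge_bij[OF assms(1,2)], of f] by simp
  also have "\<dots> = (\<Sum>\<sigma>\<in>cube V. if restrict \<sigma> \<Lambda> = \<tau> then f \<sigma> else 0)"
    using finite_cube[OF assms(3)] by (simp add: sum.inter_filter)
  finally show ?thesis .
qed

lemma merge_cube:
  assumes "\<Lambda> \<subseteq> V" "\<tau> \<in> cube \<Lambda>" "\<rho> \<in> cube (V - \<Lambda>)"
  shows "merge \<Lambda> \<tau> \<rho> \<in> cube V"
  using bij_betw_apply[OF merge_bij[OF assms(1,2)] assms(3)] by simp

lemma cond_dist:
  assumes d: "is_dist V \<nu>" and V: "finite V" and L: "\<Lambda> \<subseteq> V" and t: "\<tau> \<in> cube \<Lambda>"
    and m: "0 < marg V \<nu> \<Lambda> \<tau>"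
  shows "is_dist (V - \<Lambda>) (cond V \<nu> \<Lambda> \<tau>)"
proof -
  have "\<forall>\<rho>\<in>cube (V - \<Lambda>). 0 \<le> cond V \<nu> \<Lambda> \<tau> \<rho>"
    using d m merge_cube[OF L t] unfolding is_dist_def cond_def by auto
  moreover have "(\<Sum>\<rho>\<in>cube (V - \<Lambda>). cond V \<nu> \<Lambda> \<tau> \<rho>) = 1"
  proof -
    have "(\<Sum>\<rho>\<in>cube (V - \<Lambda>). cond V \<nu> \<Lambda> \<tau> \<rho>)
        = (\<Sum>\<rho>\<in>cube (V - \<Lambda>). \<nu> (merge \<Lambda> \<tau> \<rho>)) / marg V \<nu> \<Lambda> \<tau>"
      unfolding cond_def by (simp add: sum_divide_distrib)
    also have "(\<Sum>\<rho>\<in>cube (V - \<Lambda>). \<nu> (merge \<Lambda> \<tau> \<rho>)) = marg V \<nu> \<Lambda> \<tau>"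
      unfolding merge_sum[OF L t V] marg_def ..
    finally show ?thesis using m by simp
  qed
  ultimately show ?thesis unfolding is_dist_def by auto
qed

lemma tilt_dist:
  assumes d: "is_dist V \<mu>" and V: "finite V" and lam: "\<forall>i\<in>V. 0 < lam i"
  shows "is_dist V (tilt V lam \<mu>)"
proof -
  define P where "P = (\<lambda>\<sigma>::nat\<Rightarrow>int. \<Prod>i\<in>{i\<in>V. \<sigma> i = 1}. lam i)"
  have P0: "0 < P \<sigma>" for \<sigma> unfolding P_def using lam by (intro prod_pos) auto
  define Z where "Z = (\<Sum>\<sigma>'\<in>cube V. \<mu> \<sigma>' * P \<sigma>')"
  have fc: "finite (cube V)" by (rule finite_cube[OF V])
  obtain \<sigma>0 where s0: "\<sigma>0 \<in> cube V" "0 < \<mu> \<sigma>0"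
  proof (rule ccontr)
    assume "\<not> thesis"
    hence "\<forall>\<sigma>\<in>cube V. \<mu> \<sigma> \<le> 0" using that by force
    hence "(\<Sum>\<sigma>\<in>cube V. \<mu> \<sigma>) \<le> 0" by (intro sum_nonpos) auto
    thus False using d unfolding is_dist_def by simp
  qed
  have "0 < Z" unfolding Z_def
  proof (rule sum_pos2[OF fc s0(1)])
    show "0 < \<mu> \<sigma>0 * P \<sigma>0" using s0 P0 by simp
    show "\<And>i. i \<in> cube V \<Longrightarrow> 0 \<le> \<mu> i * P i" using d P0 unfolding is_dist_def
      by (simp add: less_imp_le)
  qed
  have t: "tilt V lam \<mu> = (\<lambda>\<sigma>. \<mu> \<sigma> * P \<sigma> / Z)" unfolding tilt_def P_def Z_def ..
  show ?thesis unfolding is_dist_def t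
    using \<open>0 < Z\<close> d P0 by (auto simp: is_dist_def sum_divide_distrib[symmetric] Z_def less_imp_le)
qed


definition S2 :: "nat set \<Rightarrow> ((nat \<Rightarrow> int) \<Rightarrow> real) \<Rightarrow> nat \<Rightarrow> nat \<Rightarrow> int \<Rightarrow> int \<Rightarrow> real" where
  "S2 W \<nu> i j x z = (\<Sum>\<sigma>\<in>cube W. if \<sigma> i = x \<and> \<sigma> j = z then \<nu> \<sigma> else 0)"

lemma condmarg:
  assumes W: "finite W" and i: "i \<in> W" and ij: "i \<noteq> j" and x: "x \<in> {-1, 1}"
  shows "marg1 (W - {i}) (cond1 W \<nu> i x) j z = S2 W \<nu> i j x z / marg1 W \<nu> i x"
proof -
  define m where "m = marg1 W \<nu> i x"
  define g where "g = (\<lambda>\<sigma>::nat\<Rightarrow>int. if \<sigma> j = z then \<nu> \<sigma> else 0)"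
  have mj: "merge {i} (pt i x) \<rho> j = \<rho> j" for \<rho> using ij unfolding merge_def by simp
  have c: "cond1 W \<nu> i x = (\<lambda>\<rho>. \<nu> (merge {i} (pt i x) \<rho>) / m)"
    unfolding cond1_def cond_def m_def marg1_def ..
  have "marg1 (W - {i}) (cond1 W \<nu> i x) j z
      = (\<Sum>\<rho>\<in>cube (W - {i}). g (merge {i} (pt i x) \<rho>) / m)"
    unfolding marg1_eq c g_def mj
    by (intro sum.cong) auto
  also have "\<dots> = (\<Sum>\<rho>\<in>cube (W - {i}). g (merge {i} (pt i x) \<rho>)) / m"
    by (simp add: sum_divide_distrib)
  also have "(\<Sum>\<rho>\<in>cube (W - {i}). g (merge {i} (pt i x) \<rho>))
      = (\<Sum>\<sigma>\<in>cube W. if restrict \<sigma> {i} = pt i x then g \<sigma> else 0)"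
    by (rule merge_sum) (use i W pt_cube[OF x] in auto)
  also have "\<dots> = S2 W \<nu> i j x z"
    unfolding S2_def restrict_pt g_def by (intro sum.cong) auto
  finally show ?thesis unfolding m_def .
qed

lemma split_i:
  assumes j: "j \<in> W"
  shows "marg1 W \<nu> i x = S2 W \<nu> i j x 1 + S2 W \<nu> i j x (-1)"
  unfolding marg1_eq S2_def sum.distrib[symmetric]
  by (intro sum.cong) (use cube_val[OF _ j] in auto)

lemma split_j:
  assumes i: "i \<in> W"
  shows "marg1 W \<nu> j z = S2 W \<nu> i j 1 z + S2 W \<nu> i j (-1) z"
  unfolding marg1_eq S2_def sum.distrib[symmetric]
  by (intro sum.cong) (use cube_val[OF _ i] in auto)

lemma total1:
  assumes d: "is_dist W \<nu>" and i: "i \<in> W"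
  shows "marg1 W \<nu> i 1 + marg1 W \<nu> i (-1) = 1"
proof -
  have "marg1 W \<nu> i 1 + marg1 W \<nu> i (-1) = (\<Sum>\<sigma>\<in>cube W. \<nu> \<sigma>)"
    unfolding marg1_eq sum.distrib[symmetric]
    by (intro sum.cong) (use cube_val[OF _ i] in auto)
  thus ?thesis using d unfolding is_dist_def by simp
qed

lemma S2_nonneg: "is_dist W \<nu> \<Longrightarrow> 0 \<le> S2 W \<nu> i j x z"
  unfolding S2_def is_dist_def by (intro sum_nonneg) auto

lemma marg1_nonneg: "is_dist W \<nu> \<Longrightarrow> 0 \<le> marg1 W \<nu> i x"
  unfolding marg1_eq is_dist_def by (intro sum_nonneg) auto

lemma entry_bounds:
  assumes d: "is_dist W \<nu>" and W: "finite W" and i: "i \<in> W" and j: "j \<in> W" and ij: "i \<noteq> j"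
  shows "0 \<le> infl W \<nu> i j \<and> \<bar>cor W \<nu> i j\<bar> \<le> infl W \<nu> i j"
proof -
  define p where "p = marg1 W \<nu> i 1"
  define q where "q = marg1 W \<nu> i (-1)"
  have pq: "p + q = 1" using total1[OF d i] unfolding p_def q_def .
  have p0: "0 \<le> p" and q0: "0 \<le> q" unfolding p_def q_def using marg1_nonneg[OF d] by auto
  define S where "S = S2 W \<nu> i j"
  have S0: "0 \<le> S x z" for x z unfolding S_def using S2_nonneg[OF d] .
  have pS: "p = S 1 1 + S 1 (-1)" and qS: "q = S (-1) 1 + S (-1) (-1)"
    unfolding p_def q_def S_def using split_i[OF j] by auto
  have mj: "marg1 W \<nu> j 1 = S 1 1 + S (-1) 1" unfolding S_def using split_j[OF i] by auto
  define supp where "supp = supp1 W \<nu> i"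
  have supp_sub: "supp \<subseteq> {-1, 1}" unfolding supp_def supp1_def by auto
  have fs: "finite supp" using finite_subset[OF supp_sub] by simp
  have Deq: "{dtv_j W \<nu> i x y j | x y. x \<in> supp1 W \<nu> i \<and> y \<in> supp1 W \<nu> i}
      = (\<lambda>(x, y). dtv_j W \<nu> i x y j) ` (supp \<times> supp)"
    unfolding supp_def by auto
  have inflD: "infl W \<nu> i j = Max ((\<lambda>(x, y). dtv_j W \<nu> i x y j) ` (supp \<times> supp))"
    unfolding infl_def Deq using ij by simp
  have dtv0: "0 \<le> dtv_j W \<nu> i x y j" for x y unfolding dtv_j_def by (intro mult_nonneg_nonneg sum_nonneg) auto
  have sne: "supp \<noteq> {}"
  proof
    assume "supp = {}"
    hence "\<not> 0 < p" "\<not> 0 < q" unfolding supp_def supp1_def p_def q_def by auto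
    thus False using pq by simp
  qed
  then obtain x0 where x0: "x0 \<in> supp" by auto
  have fin: "finite ((\<lambda>(x, y). dtv_j W \<nu> i x y j) ` (supp \<times> supp))" using fs by simp
  have geq: "x \<in> supp \<Longrightarrow> y \<in> supp \<Longrightarrow> dtv_j W \<nu> i x y j \<le> infl W \<nu> i j" for x y
    unfolding inflD by (rule Max_ge[OF fin]) auto
  have nonneg: "0 \<le> infl W \<nu> i j" using geq[OF x0 x0] dtv0[of x0 x0] by simp
  have "\<bar>cor W \<nu> i j\<bar> \<le> infl W \<nu> i j"
  proof (cases "0 < p")
    case False
    hence "1 \<notin> supp1 W \<nu> i" unfolding supp1_def p_def by auto
    thus ?thesis using nonneg ij unfolding cor_def by simp
  next
    case pp: True
    hence s1: "1 \<in> supp1 W \<nu> i" unfolding supp1_def p_def by auto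
    have A1: "marg1 (W - {i}) (cond1 W \<nu> i 1) j z = S 1 z / p" for z
      using condmarg[OF W i ij, of 1] unfolding S_def p_def by simp
    have cor_eq: "cor W \<nu> i j = S 1 1 / p - (S 1 1 + S (-1) 1)"
      unfolding cor_def using ij s1 A1 mj by simp
    show ?thesis
    proof (cases "0 < q")
      case False
      hence "q = 0" using q0 by simp
      hence "S (-1) 1 = 0" using qS S0[of "-1" 1] S0[of "-1" "-1"] by simp
      moreover have "p = 1" using pq \<open>q = 0\<close> by simp
      ultimately have "cor W \<nu> i j = 0" unfolding cor_eq by simp
      thus ?thesis using nonneg by simp
    next
      case qq: True
      have s2: "-1 \<in> supp" unfolding supp_def supp1_def using qq q_def by auto
      have s1': "1 \<in> supp" using s1 supp_def by simp
      have A2: "marg1 (W - {i}) (cond1 W \<nu> i (-1)) j z = S (-1) z / q" for z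
        using condmarg[OF W i ij, of "-1"] unfolding S_def q_def by simp
      have "dtv_j W \<nu> i 1 (-1) j = (1/2) * (\<bar>S 1 (-1) / p - S (-1) (-1) / q\<bar> + \<bar>S 1 1 / p - S (-1) 1 / q\<bar>)"
        unfolding dtv_j_def A1 A2 by simp
      also have "S 1 (-1) / p - S (-1) (-1) / q = - (S 1 1 / p - S (-1) 1 / q)"
      proof -
        have "S 1 (-1) / p = 1 - S 1 1 / p" using pS pp by (simp add: field_simps)
        moreover have "S (-1) (-1) / q = 1 - S (-1) 1 / q" using qS qq by (simp add: field_simps)
        ultimately show ?thesis by simp
      qed
      finally have dtv: "dtv_j W \<nu> i 1 (-1) j = \<bar>S 1 1 / p - S (-1) 1 / q\<bar>" by simp
      have "cor W \<nu> i j = q * (S 1 1 / p - S (-1) 1 / q)"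
      proof -
        have p1: "p = 1 - q" using pq by simp
        have "1 - q \<noteq> 0" using pp p1 by simp
        thus ?thesis unfolding cor_eq p1 using qq by (simp add: field_simps)
      qed
      hence "\<bar>cor W \<nu> i j\<bar> = q * \<bar>S 1 1 / p - S (-1) 1 / q\<bar>" using q0 by (simp add: abs_mult)
      also have "\<dots> \<le> \<bar>S 1 1 / p - S (-1) 1 / q\<bar>"
        using pq p0 q0 by (intro mult_left_le_one_le) auto
      also have "\<dots> \<le> infl W \<nu> i j" using geq[OF s1' s2] dtv by simp
      finally show ?thesis .
    qed
  qed
  with nonneg show ?thesis by simp
qed

lemma diag_bound:
  assumes d: "is_dist W \<nu>" and i: "i \<in> W"
  shows "\<bar>cor W \<nu> i i\<bar> \<le> 1"
proof -
  have "cor W \<nu> i i = marg1 W \<nu> i (-1)" unfolding cor_def by simp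
  moreover have "0 \<le> marg1 W \<nu> i (-1)" "0 \<le> marg1 W \<nu> i 1" using marg1_nonneg[OF d] by auto
  ultimately show ?thesis using total1[OF d i] by simp
qed


theorem lemma6p6:
  fixes n :: nat and \<eta> \<epsilon> :: real and \<mu> :: "(nat \<Rightarrow> int) \<Rightarrow> real"
  assumes "0 < \<eta>" and "0 < \<epsilon>"
    and "is_dist {0..<n} \<mu>"
    and "completely_SI \<eta> \<epsilon> {0..<n} \<mu>"
  shows "complete_limited_correlation (\<eta> + 1) \<epsilon> {0..<n} \<mu>"
  unfolding complete_limited_correlation_def
proof (intro allI impI)
  fix lam :: "nat \<Rightarrow> real"
  assume lam: "\<forall>i\<in>{0..<n}. 0 < lam i \<and> lam i \<le> 1 + \<epsilon>"
  define V where "V = {0..<n::nat}"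
  have V: "finite V" unfolding V_def by simp
  have SI: "spectrally_independent \<eta> V (tilt V lam \<mu>)"
    using assms(4) lam unfolding completely_SI_def V_def by blast
  have td: "is_dist V (tilt V lam \<mu>)"
    using tilt_dist[OF assms(3)[folded V_def] V] lam unfolding V_def by blast
  show "limited_correlation (\<eta> + 1) {0..<n} (tilt {0..<n} lam \<mu>)"
    unfolding limited_correlation_def V_def[symmetric]
  proof (intro allI impI ballI)
    fix \<Lambda> \<tau>
    assume L: "\<Lambda> \<subseteq> V" and t: "\<tau> \<in> cube \<Lambda>" and m: "0 < marg V (tilt V lam \<mu>) \<Lambda> \<tau>"
    define W where "W = V - \<Lambda>"
    define \<nu> where "\<nu> = cond V (tilt V lam \<mu>) \<Lambda> \<tau>"
    have d: "is_dist W \<nu>" unfolding W_def \<nu>_def by (rule cond_dist[OF td V L t m])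
    have W: "finite W" unfolding W_def using V by simp
    have "spec_rad W (abscor W \<nu>) \<le> 1 + spec_rad W (infl W \<nu>)"
    proof (rule spec_rad_bound[OF W])
      fix i j assume i: "i \<in> W" and j: "j \<in> W"
      show "\<bar>abscor W \<nu> i j\<bar> \<le> (if i = j then 1 else 0) + infl W \<nu> i j"
      proof (cases "i = j")
        case True
        then show ?thesis using diag_bound[OF d i] unfolding abscor_def infl_def by simp
      next
        case False
        then show ?thesis using entry_bounds[OF d W i j False] unfolding abscor_def by simp
      qed
      show "0 \<le> infl W \<nu> i j"
      proof (cases "i = j")
        case True
        then show ?thesis unfolding infl_def by simp
      next
        case False
        then show ?thesis using entry_bounds[OF d W i j False] by simp
      qed
    qed
    moreover have "spec_rad W (infl W \<nu>) \<le> \<eta>"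
      using SI L t m unfolding spectrally_independent_def W_def \<nu>_def by blast
    ultimately show "spec_rad (V - \<Lambda>) (abscor (V - \<Lambda>) (cond V (tilt V lam \<mu>) \<Lambda> \<tau>)) \<le> \<eta> + 1"
      unfolding W_def \<nu>_def by simp
  qed
qed

end
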